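(* Let $\sigma(x,y)=(x\rightharpoonup y,x\leftharpoonup y)$ be an involutive non-degenerate quiver-theoretic Yang--Baxter map on a quiver $\mathscr{A}$ over $\Lambda$, and let $E$ be the closure of (the image of) $\mathscr{A}$ under right-lcms in the structure category $\mathscr{C}(\sigma)$. Let $x\bullet y:=(\cdot\leftharpoonup x)^{-1}(y)$ for $\mathfrak{t}(x)=\mathfrak{t}(y)$ and $x\,\tilde\star\,y:=y\bullet x$. For $\mu\in\Lambda$ and a finite set $J=\{y_1,\dots,y_n\}\subseteq\mathscr{A}(\Lambda,\mu)$ of pairwise distinct arrows, define $\tilde\Omega_1(y_1)=y_1$, $\tilde\Omega_j(y_1,\dots,y_j)=\tilde\Omega_{j-1}(y_1,y_3,\dots,y_j)\,\tilde\star\,\tilde\Omega_{j-1}(y_2,\dots,y_j)$ for $2\le j\le n$, and $\tilde\Delta_J=[\tilde\Omega_n(y_1,\dots,y_n)|\tilde\Omega_{n-1}(y_2,\dots,y_n)|\dots|\tilde\Omega_1(y_n)]\in\mathscr{C}(\sigma)$ (the left-lcm of $J$). Then $E=\{\tilde\Delta_J\mid\mu\in\Lambda,\ J\subseteq\mathscr{A}(\Lambda,\mu),\ 1\le|J|<\infty\}\cup\mathbf{1}_{\mathscr{A}}$, where $\mathbf{1}_{\mathscr{A}}$ is the set of identities of $\mathscr{C}(\sigma)$.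
   Context: A quiver-theoretic Yang--Baxter map is a source/target-preserving map $\sigma$ on composable pairs satisfying the braid relation; involutive: $\sigma^2=\mathrm{id}$; non-degenerate: all $x\rightharpoonup\cdot\colon\mathscr{A}(\mathfrak{t}(x),\Lambda)\to\mathscr{A}(\mathfrak{s}(x),\Lambda)$ and $\cdot\leftharpoonup y\colon\mathscr{A}(\Lambda,\mathfrak{s}(y))\to\mathscr{A}(\Lambda,\mathfrak{t}(y))$ bijective. $\mathscr{C}(\sigma)$ is the category presented by generators $\mathscr{A}$ and relations $x|y\sim(x\rightharpoonup y)|(x\leftharpoonup y)$; $[w]$ denotes the class of a path $w$. Right-lcm (resp. left-lcm): a common right- (resp. left-) multiple that left- (resp. right-) divides every common right- (resp. left-) multiple. *)

theory Defs
  imports Main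
begin

text \<open>A path is a pair (v, xs): start vertex v and a list of consecutive arrows
  (tgt of each arrow equals src of the next).  sigma x y = (x \<rightharpoonup> y, x \<leftharpoonup> y).\<close>

definition quiver :: "'v set \<Rightarrow> 'a set \<Rightarrow> ('a \<Rightarrow> 'v) \<Rightarrow> ('a \<Rightarrow> 'v) \<Rightarrow> bool" where
  "quiver Lam A src tgt \<longleftrightarrow> (\<forall>x\<in>A. src x \<in> Lam \<and> tgt x \<in> Lam)"

definition composable :: "'a set \<Rightarrow> ('a \<Rightarrow> 'v) \<Rightarrow> ('a \<Rightarrow> 'v) \<Rightarrow> 'a \<Rightarrow> 'a \<Rightarrow> bool" where
  "composable A src tgt x y \<longleftrightarrow> x \<in> A \<and> y \<in> A \<and> tgt x = src y"

definition sig1 :: "('a \<Rightarrow> 'a \<Rightarrow> 'a \<times> 'a) \<Rightarrow> 'a \<times> 'a \<times> 'a \<Rightarrow> 'a \<times> 'a \<times> 'a" where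
  "sig1 sigma t = (case t of (x, y, z) \<Rightarrow> (fst (sigma x y), snd (sigma x y), z))"

definition sig2 :: "('a \<Rightarrow> 'a \<Rightarrow> 'a \<times> 'a) \<Rightarrow> 'a \<times> 'a \<times> 'a \<Rightarrow> 'a \<times> 'a \<times> 'a" where
  "sig2 sigma t = (case t of (x, y, z) \<Rightarrow> (x, fst (sigma y z), snd (sigma y z)))"

definition qybm ::
  "'v set \<Rightarrow> 'a set \<Rightarrow> ('a \<Rightarrow> 'v) \<Rightarrow> ('a \<Rightarrow> 'v) \<Rightarrow> ('a \<Rightarrow> 'a \<Rightarrow> 'a \<times> 'a) \<Rightarrow> bool" where
  "qybm Lam A src tgt sigma \<longleftrightarrow>
     quiver Lam A src tgt \<and>
     (\<forall>x y. composable A src tgt x y \<longrightarrow>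
        fst (sigma x y) \<in> A \<and> snd (sigma x y) \<in> A \<and>
        src (fst (sigma x y)) = src x \<and>
        tgt (fst (sigma x y)) = src (snd (sigma x y)) \<and>
        tgt (snd (sigma x y)) = tgt y) \<and>
     (\<forall>x y z. composable A src tgt x y \<and> composable A src tgt y z \<longrightarrow>
        sig1 sigma (sig2 sigma (sig1 sigma (x, y, z))) =
        sig2 sigma (sig1 sigma (sig2 sigma (x, y, z))))"

definition involutive ::
  "'a set \<Rightarrow> ('a \<Rightarrow> 'v) \<Rightarrow> ('a \<Rightarrow> 'v) \<Rightarrow> ('a \<Rightarrow> 'a \<Rightarrow> 'a \<times> 'a) \<Rightarrow> bool" where
  "involutive A src tgt sigma \<longleftrightarrow>
     (\<forall>x y. composable A src tgt x y \<longrightarrow> sigma (fst (sigma x y)) (snd (sigma x y)) = (x, y))"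

definition nondegenerate ::
  "'a set \<Rightarrow> ('a \<Rightarrow> 'v) \<Rightarrow> ('a \<Rightarrow> 'v) \<Rightarrow> ('a \<Rightarrow> 'a \<Rightarrow> 'a \<times> 'a) \<Rightarrow> bool" where
  "nondegenerate A src tgt sigma \<longleftrightarrow>
     (\<forall>x\<in>A. bij_betw (\<lambda>y. fst (sigma x y)) {y\<in>A. src y = tgt x} {y\<in>A. src y = src x}) \<and>
     (\<forall>y\<in>A. bij_betw (\<lambda>x. snd (sigma x y)) {x\<in>A. tgt x = src y} {x\<in>A. tgt x = tgt y})"

fun chain :: "('a \<Rightarrow> 'v) \<Rightarrow> ('a \<Rightarrow> 'v) \<Rightarrow> 'v \<Rightarrow> 'a list \<Rightarrow> bool" where
  "chain src tgt v [] = True"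
| "chain src tgt v (x # xs) = (src x = v \<and> chain src tgt (tgt x) xs)"

definition is_path ::
  "'v set \<Rightarrow> 'a set \<Rightarrow> ('a \<Rightarrow> 'v) \<Rightarrow> ('a \<Rightarrow> 'v) \<Rightarrow> 'v \<times> 'a list \<Rightarrow> bool" where
  "is_path Lam A src tgt p \<longleftrightarrow> fst p \<in> Lam \<and> set (snd p) \<subseteq> A \<and> chain src tgt (fst p) (snd p)"

definition ptgt :: "('a \<Rightarrow> 'v) \<Rightarrow> 'v \<times> 'a list \<Rightarrow> 'v" where
  "ptgt tgt p = (if snd p = [] then fst p else tgt (last (snd p)))"

inductive ystep for Lam A src tgt sigma where
  "is_path Lam A src tgt (v, u @ [x, y] @ w) \<Longrightarrow>
   ystep Lam A src tgt sigma (v, u @ [x, y] @ w) (v, u @ [fst (sigma x y), snd (sigma x y)] @ w)"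

definition peq where
  "peq Lam A src tgt sigma =
     (\<lambda>p q. (\<lambda>a b. ystep Lam A src tgt sigma a b \<or> ystep Lam A src tgt sigma b a)\<^sup>*\<^sup>* p q)"

definition cls where
  "cls Lam A src tgt sigma p = {q. peq Lam A src tgt sigma p q}"

definition Mor where
  "Mor Lam A src tgt sigma = cls Lam A src tgt sigma ` {p. is_path Lam A src tgt p}"

definition ldiv where
  "ldiv Lam A src tgt sigma f g \<longleftrightarrow>
     (\<exists>p r. is_path Lam A src tgt p \<and> is_path Lam A src tgt r \<and> fst r = ptgt tgt p \<and>
        f = cls Lam A src tgt sigma p \<and> g = cls Lam A src tgt sigma (fst p, snd p @ snd r))"

definition is_rlcm where
  "is_rlcm Lam A src tgt sigma f g m \<longleftrightarrow>
     ldiv Lam A src tgt sigma f m \<and> ldiv Lam A src tgt sigma g m \<and>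
     (\<forall>m'\<in>Mor Lam A src tgt sigma.
        ldiv Lam A src tgt sigma f m' \<and> ldiv Lam A src tgt sigma g m' \<longrightarrow>
        ldiv Lam A src tgt sigma m m')"

text \<open>Closure of (the image of) A, together with identities (right-lcms of empty families),
  under right-lcms.\<close>
inductive_set rlcm_closure for Lam A src tgt sigma where
  idn: "v \<in> Lam \<Longrightarrow> cls Lam A src tgt sigma (v, []) \<in> rlcm_closure Lam A src tgt sigma"
| gen: "x \<in> A \<Longrightarrow> cls Lam A src tgt sigma (src x, [x]) \<in> rlcm_closure Lam A src tgt sigma"
| lcm: "f \<in> rlcm_closure Lam A src tgt sigma \<Longrightarrow> g \<in> rlcm_closure Lam A src tgt sigma \<Longrightarrow>
        is_rlcm Lam A src tgt sigma f g m \<Longrightarrow> m \<in> rlcm_closure Lam A src tgt sigma"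

definition bullet where
  "bullet A src tgt sigma x y = inv_into {z\<in>A. tgt z = src x} (\<lambda>z. snd (sigma z x)) y"

definition tstar where
  "tstar A src tgt sigma x y = bullet A src tgt sigma y x"

fun Omega :: "'a set \<Rightarrow> ('a \<Rightarrow> 'v) \<Rightarrow> ('a \<Rightarrow> 'v) \<Rightarrow> ('a \<Rightarrow> 'a \<Rightarrow> 'a \<times> 'a) \<Rightarrow> 'a list \<Rightarrow> 'a" where
  "Omega A src tgt sigma [] = undefined"
| "Omega A src tgt sigma [y] = y"
| "Omega A src tgt sigma (y1 # y2 # ys) =
     tstar A src tgt sigma (Omega A src tgt sigma (y1 # ys)) (Omega A src tgt sigma (y2 # ys))"

fun Omegas where
  "Omegas A src tgt sigma [] = []"
| "Omegas A src tgt sigma (y # ys) = Omega A src tgt sigma (y # ys) # Omegas A src tgt sigma ys"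

definition Delta where
  "Delta Lam A src tgt sigma ys =
     cls Lam A src tgt sigma (src (Omega A src tgt sigma ys), Omegas A src tgt sigma ys)"

end

theory Submission
  imports Defs "HOL-Library.Multiset"
begin
fun Phi :: "('a \<Rightarrow> 'a \<Rightarrow> 'a \<times> 'a) \<Rightarrow> 'a list \<Rightarrow> 'a multiset" where
  "Phi s [] = {#}"
| "Phi s (x # xs) = add_mset x (image_mset (\<lambda>y. fst (s x y)) (Phi s xs))"

fun Lp :: "('a \<Rightarrow> 'a \<Rightarrow> 'a \<times> 'a) \<Rightarrow> 'a list \<Rightarrow> 'a \<Rightarrow> 'a" where
  "Lp s [] = id"
| "Lp s (x # xs) = (\<lambda>y. fst (s x y)) \<circ> Lp s xs"

definition sqf :: "'a multiset \<Rightarrow> bool" where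
  "sqf M \<longleftrightarrow> (\<forall>z. count M z \<le> 1)"

lemma Phi_append: "Phi s (xs @ ys) = Phi s xs + image_mset (Lp s xs) (Phi s ys)"
  by (induction xs) (auto simp: multiset.map_comp o_def)

lemma Lp_append: "Lp s (xs @ ys) = Lp s xs \<circ> Lp s ys"
  by (induction xs) auto

lemma size_Phi: "size (Phi s xs) = length xs"
  by (induction xs) auto

lemma chain_append:
  "chain src tgt v (xs @ ys) \<longleftrightarrow> chain src tgt v xs \<and> chain src tgt (ptgt tgt (v, xs)) ys"
  by (induction xs arbitrary: v) (auto simp: ptgt_def)

lemma ptgt_Cons: "ptgt tgt (v, x # xs) = ptgt tgt (tgt x, xs)"
  by (auto simp: ptgt_def)

lemma SQ2: "fst (s a b) = a \<Longrightarrow> \<not> sqf (Phi s (u @ [a, b] @ w))"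
proof
  assume h: "fst (s a b) = a" and q: "sqf (Phi s (u @ [a, b] @ w))"
  have "Phi s ([a, b] @ w) = add_mset a (add_mset a (image_mset (\<lambda>y. fst (s a y)) (image_mset (\<lambda>y. fst (s b y)) (Phi s w))))"
    using h by simp
  then have "{#a, a#} \<subseteq># Phi s ([a, b] @ w)" by simp
  then have "image_mset (Lp s u) {#a, a#} \<subseteq># image_mset (Lp s u) (Phi s ([a, b] @ w))"
    by (rule image_mset_subseteq_mono)
  also have "\<dots> \<subseteq># Phi s (u @ [a, b] @ w)"
    by (simp only: Phi_append[of s u]) simp
  finally have "count (image_mset (Lp s u) {#a, a#}) (Lp s u a) \<le> count (Phi s (u @ [a, b] @ w)) (Lp s u a)"
    by (rule mset_subset_eq_count)
  then have "count (Phi s (u @ [a, b] @ w)) (Lp s u a) \<ge> 2" by simp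
  with q show False unfolding sqf_def by (metis le_trans numeral_le_one_iff semiring_norm(69))
qed

lemma image_mset_inv:
  assumes "inj_on f S" "set_mset M \<subseteq> S"
  shows "image_mset (inv_into S f) (image_mset f M) = M"
proof -
  have "image_mset (inv_into S f) (image_mset f M) = image_mset (inv_into S f \<circ> f) M"
    by (simp add: multiset.map_comp)
  also have "\<dots> = image_mset id M"
    by (rule image_mset_cong) (use assms in auto)
  finally show ?thesis by simp
qed

lemma image_mset_inj_eq:
  assumes "inj_on f S" "set_mset M \<subseteq> S" "set_mset N \<subseteq> S" "image_mset f M = image_mset f N"
  shows "M = N"
  by (metis assms image_mset_inv)

lemma pe_refl: "peq Lam A src tgt s p p"
  by (simp add: peq_def)

lemma pe_trans: "peq Lam A src tgt s p q \<Longrightarrow> peq Lam A src tgt s q r \<Longrightarrow> peq Lam A src tgt s p r"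
  unfolding peq_def by (rule rtranclp_trans)

lemma pe_sym: "peq Lam A src tgt s p q \<Longrightarrow> peq Lam A src tgt s q p"
  unfolding peq_def
proof (induction rule: rtranclp_induct)
  case base then show ?case by simp
next
  case (step y z)
  then show ?case by (metis (mono_tags, lifting) converse_rtranclp_into_rtranclp)
qed

lemma pe_step: "ystep Lam A src tgt s p q \<Longrightarrow> peq Lam A src tgt s p q"
  unfolding peq_def by auto

lemma cls_eq: "peq Lam A src tgt s p q \<Longrightarrow> cls Lam A src tgt s p = cls Lam A src tgt s q"
  unfolding cls_def by (auto intro: pe_trans pe_sym)

lemma cls_eqD: "cls Lam A src tgt s p = cls Lam A src tgt s q \<Longrightarrow> peq Lam A src tgt s p q"
  unfolding cls_def using pe_refl by (metis mem_Collect_eq)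

lemma ystep_fst: "ystep Lam A src tgt s a b \<Longrightarrow> fst a = fst b"
  by (induction rule: ystep.induct) auto

locale phith =
  fixes Lam :: "'v set" and A :: "'a set" and src tgt :: "'a \<Rightarrow> 'v"
    and sig :: "'a \<Rightarrow> 'a \<Rightarrow> 'a \<times> 'a"
  assumes quiv: "\<And>x. x \<in> A \<Longrightarrow> src x \<in> Lam \<and> tgt x \<in> Lam"
    and comp: "\<And>x y. x \<in> A \<Longrightarrow> y \<in> A \<Longrightarrow> tgt x = src y \<Longrightarrow>
        fst (sig x y) \<in> A \<and> snd (sig x y) \<in> A \<and> src (fst (sig x y)) = src x \<and>
        tgt (fst (sig x y)) = src (snd (sig x y)) \<and> tgt (snd (sig x y)) = tgt y"
    and inv1: "\<And>x y. x \<in> A \<Longrightarrow> y \<in> A \<Longrightarrow> tgt x = src y \<Longrightarrow>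
        fst (sig (fst (sig x y)) (snd (sig x y))) = x"
    and braid1: "\<And>x y z. x \<in> A \<Longrightarrow> y \<in> A \<Longrightarrow> z \<in> A \<Longrightarrow> tgt x = src y \<Longrightarrow> tgt y = src z \<Longrightarrow>
        fst (sig x (fst (sig y z))) = fst (sig (fst (sig x y)) (fst (sig (snd (sig x y)) z)))"
    and nd: "\<And>x. x \<in> A \<Longrightarrow> bij_betw (\<lambda>y. fst (sig x y)) {y\<in>A. src y = tgt x} {y\<in>A. src y = src x}"
begin

abbreviation "pe \<equiv> peq Lam A src tgt sig"
abbreviation "vp \<equiv> is_path Lam A src tgt"

lemma Phi_set: "set xs \<subseteq> A \<Longrightarrow> chain src tgt v xs \<Longrightarrow> set_mset (Phi sig xs) \<subseteq> {z\<in>A. src z = v}"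
proof (induction xs arbitrary: v)
  case Nil then show ?case by simp
next
  case (Cons x xs)
  then have IH: "set_mset (Phi sig xs) \<subseteq> {z\<in>A. src z = tgt x}" by simp
  show ?case using Cons.prems IH comp by auto
qed

lemma Phi_set_vp: "vp (v, xs) \<Longrightarrow> set_mset (Phi sig xs) \<subseteq> {z\<in>A. src z = v}"
  using Phi_set unfolding is_path_def by auto

lemma Lp_bij: "set xs \<subseteq> A \<Longrightarrow> chain src tgt v xs \<Longrightarrow>
   bij_betw (Lp sig xs) {z\<in>A. src z = ptgt tgt (v, xs)} {z\<in>A. src z = v}"
proof (induction xs arbitrary: v)
  case Nil then show ?case by (simp add: ptgt_def bij_betw_def)
next
  case (Cons x xs)
  then have IH: "bij_betw (Lp sig xs) {z\<in>A. src z = ptgt tgt (tgt x, xs)} {z\<in>A. src z = tgt x}" by simp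
  have "bij_betw (\<lambda>y. fst (sig x y)) {y\<in>A. src y = tgt x} {y\<in>A. src y = v}"
    using nd[of x] Cons.prems by simp
  from bij_betw_trans[OF IH this] show ?case by (simp add: ptgt_Cons o_def)
qed

lemma ptgt_Lam: assumes "vp p" shows "ptgt tgt p \<in> Lam"
proof (cases "snd p = []")
  case True
  then show ?thesis using assms by (simp add: is_path_def ptgt_def)
next
  case False
  from assms have "last (snd p) \<in> A" using False last_in_set[of "snd p"] by (auto simp: is_path_def)
  then show ?thesis using False quiv by (simp add: ptgt_def)
qed

lemma ystep_props:
  assumes "ystep Lam A src tgt sig a b"
  shows "vp a \<and> vp b \<and> fst a = fst b \<and> Phi sig (snd a) = Phi sig (snd b)"
  using assms
proof (cases rule: ystep.cases)
  case (1 v u x y w)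
  let ?x = "fst (sig x y)" and ?y = "snd (sig x y)"
  from 1 have va: "vp (v, u @ [x, y] @ w)" by simp
  then have ch: "chain src tgt v u" "src x = ptgt tgt (v, u)" "src y = tgt x" "chain src tgt (tgt y) w"
    and inA: "set u \<subseteq> A" "x \<in> A" "y \<in> A" "set w \<subseteq> A" and vL: "v \<in> Lam"
    unfolding is_path_def by (auto simp: chain_append)
  have c: "?x \<in> A" "?y \<in> A" "src ?x = src x" "tgt ?x = src ?y" "tgt ?y = tgt y"
    using comp[of x y] inA ch by auto
  have vb: "vp (v, u @ [?x, ?y] @ w)"
    unfolding is_path_def using ch inA c vL by (auto simp: chain_append)
  have ws: "set_mset (Phi sig w) \<subseteq> {z\<in>A. src z = tgt y}" using Phi_set inA ch by blast
  have "Phi sig ([x, y] @ w) = Phi sig ([?x, ?y] @ w)"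
  proof -
    have e1: "fst (sig ?x ?y) = x" using inv1 inA ch by simp
    have e2: "image_mset (\<lambda>z. fst (sig x (fst (sig y z)))) (Phi sig w) =
              image_mset (\<lambda>z. fst (sig ?x (fst (sig ?y z)))) (Phi sig w)"
      by (rule image_mset_cong) (use braid1 inA ch ws in auto)
    show ?thesis using e1 e2 by (simp add: multiset.map_comp o_def add_mset_commute)
  qed
  then have "Phi sig (u @ [x, y] @ w) = Phi sig (u @ [?x, ?y] @ w)"
    by (simp only: Phi_append[of sig u])
  then show ?thesis using 1 va vb by simp
qed

lemma pe_props: "pe a b \<Longrightarrow> vp a \<Longrightarrow> vp b \<and> fst a = fst b \<and> Phi sig (snd a) = Phi sig (snd b)"
  unfolding peq_def
proof (induction rule: rtranclp_induct)
  case base then show ?case by simp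
next
  case (step y z)
  then show ?case using ystep_props by metis
qed

lemma ystep_cons:
  assumes "ystep Lam A src tgt sig a b" "fst a = tgt x" "x \<in> A"
  shows "ystep Lam A src tgt sig (src x, x # snd a) (src x, x # snd b)"
  using assms(1)
proof (cases rule: ystep.cases)
  case (1 v u y z w)
  have "vp (src x, (x # u) @ [y, z] @ w)"
    using 1 assms quiv[of x] unfolding is_path_def by auto
  then have "ystep Lam A src tgt sig (src x, (x # u) @ [y, z] @ w)
      (src x, (x # u) @ [fst (sig y z), snd (sig y z)] @ w)"
    by (rule ystep.intros)
  then show ?thesis using 1 by simp
qed

lemma pe_cons_gen: "pe p q \<Longrightarrow> fst p = tgt x \<Longrightarrow> x \<in> A \<Longrightarrow> pe (src x, x # snd p) (src x, x # snd q)"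
  unfolding peq_def
proof (induction rule: rtranclp_induct)
  case base then show ?case by simp
next
  case (step y z)
  have fy: "fst y = tgt x" using step.hyps(1) step.prems
    by (induction rule: rtranclp_induct) (auto dest: ystep_fst)
  from step.hyps(2) have "ystep Lam A src tgt sig (src x, x # snd y) (src x, x # snd z) \<or>
      ystep Lam A src tgt sig (src x, x # snd z) (src x, x # snd y)"
    using ystep_cons fy step.prems ystep_fst by metis
  then have "(\<lambda>a b. ystep Lam A src tgt sig a b \<or> ystep Lam A src tgt sig b a) (src x, x # snd y) (src x, x # snd z)"
    by auto
  from rtranclp.rtrancl_into_rtrancl[OF step.IH[OF step.prems] this] show ?case .
qed

lemma pe_cons: "pe (tgt x, xs) (w, ys) \<Longrightarrow> x \<in> A \<Longrightarrow> pe (src x, x # xs) (src x, x # ys)"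
  using pe_cons_gen[of "(tgt x, xs)" "(w, ys)" x] by simp

end

context phith begin

lemma vp_cons: "vp (v, x # xs) \<longleftrightarrow> v \<in> Lam \<and> x \<in> A \<and> src x = v \<and> vp (tgt x, xs)"
  unfolding is_path_def using quiv by auto

lemma realize: "vp (v, xs) \<Longrightarrow> z \<in># Phi sig xs \<Longrightarrow> \<exists>s. pe (v, xs) (v, z # s)"
proof (induction xs arbitrary: v z)
  case Nil then show ?case by simp
next
  case (Cons x xs)
  from Cons.prems(1) have x: "x \<in> A" "src x = v" "vp (tgt x, xs)" by (auto simp: vp_cons)
  show ?case
  proof (cases "z = x")
    case True then show ?thesis using pe_refl by blast
  next
    case False
    with Cons.prems(2) obtain z' where z': "z' \<in># Phi sig xs" "z = fst (sig x z')" by auto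
    from Cons.IH[OF x(3) z'(1)] obtain s where s: "pe (tgt x, xs) (tgt x, z' # s)" by blast
    have p1: "pe (v, x # xs) (v, x # z' # s)" using pe_cons[OF s x(1)] x by simp
    have "vp (v, x # z' # s)" using pe_props[OF p1 Cons.prems(1)] by simp
    then have "vp (v, [] @ [x, z'] @ s)" by simp
    from pe_step[OF ystep.intros[OF this]] have "pe (v, x # z' # s) (v, z # snd (sig x z') # s)"
      using z' by simp
    from pe_trans[OF p1 this] show ?thesis by blast
  qed
qed

lemma Lx_inj: "x \<in> A \<Longrightarrow> inj_on (\<lambda>y. fst (sig x y)) {y\<in>A. src y = tgt x}"
  using nd bij_betw_def by blast

lemma inj_len: "length xs = n \<Longrightarrow> vp (v, xs) \<Longrightarrow> vp (v, ys) \<Longrightarrow> Phi sig xs = Phi sig ys \<Longrightarrow> pe (v, xs) (v, ys)"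
proof (induction n arbitrary: v xs ys)
  case 0 then show ?case using size_Phi[of sig ys] by (simp add: pe_refl)
next
  case (Suc n)
  then obtain x xs' where xs: "xs = x # xs'" by (cases xs) auto
  have "length ys = Suc n" using Suc.prems size_Phi by metis
  then obtain y ys' where ys: "ys = y # ys'" by (cases ys) auto
  from Suc.prems xs have x: "x \<in> A" "src x = v" "vp (tgt x, xs')" "length xs' = n" by (auto simp: vp_cons)
  from Suc.prems ys have y: "y \<in> A" "src y = v" "vp (tgt y, ys')" by (auto simp: vp_cons)
  have PE: "add_mset x (image_mset (\<lambda>z. fst (sig x z)) (Phi sig xs')) =
      add_mset y (image_mset (\<lambda>z. fst (sig y z)) (Phi sig ys'))"
    using Suc.prems xs ys by simp
  show ?case
  proof (cases "x = y")
    case True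
    then have "image_mset (\<lambda>z. fst (sig x z)) (Phi sig xs') = image_mset (\<lambda>z. fst (sig x z)) (Phi sig ys')"
      using PE by simp
    moreover have "set_mset (Phi sig ys') \<subseteq> {z\<in>A. src z = tgt x}" using Phi_set_vp[OF y(3)] True by simp
    ultimately have "Phi sig xs' = Phi sig ys'"
      using image_mset_inj_eq[OF Lx_inj[OF x(1)] Phi_set_vp[OF x(3)]] by blast
    from Suc.IH[OF x(4) x(3) _ this] y(3) True have "pe (tgt x, xs') (tgt x, ys')" by simp
    from pe_cons[OF this x(1)] show ?thesis using xs ys True x by simp
  next
    case False
    have "y \<in># add_mset x (image_mset (\<lambda>z. fst (sig x z)) (Phi sig xs'))" using PE by simp
    then have "y \<in># image_mset (\<lambda>z. fst (sig x z)) (Phi sig xs')" using False by simp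
    then obtain y' where y': "y' \<in># Phi sig xs'" "y = fst (sig x y')" by auto
    from realize[OF x(3) y'(1)] obtain s where s: "pe (tgt x, xs') (tgt x, y' # s)" by blast
    have p1: "pe (v, x # xs') (v, x # y' # s)" using pe_cons[OF s x(1)] x by simp
    have "vp (v, x # y' # s)" using pe_props[OF p1] Suc.prems xs by simp
    then have "vp (v, [] @ [x, y'] @ s)" by simp
    from pe_step[OF ystep.intros[OF this]] have "pe (v, x # y' # s) (v, y # snd (sig x y') # s)"
      using y' by simp
    from pe_trans[OF p1 this] xs have p2: "pe (v, xs) (v, y # snd (sig x y') # s)" by simp
    let ?t = "snd (sig x y') # s"
    from pe_props[OF p2] Suc.prems have vt: "vp (v, y # ?t)" and ph: "Phi sig xs = Phi sig (y # ?t)" by auto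
    have vt': "vp (tgt y, ?t)" using vt by (simp add: vp_cons)
    have lt: "length ?t = n" using ph size_Phi[of sig xs] size_Phi[of sig "y # ?t"] Suc.prems by simp
    have "image_mset (\<lambda>z. fst (sig y z)) (Phi sig ?t) = image_mset (\<lambda>z. fst (sig y z)) (Phi sig ys')"
      using ph Suc.prems ys by simp
    then have "Phi sig ?t = Phi sig ys'"
      by (rule image_mset_inj_eq[OF Lx_inj[OF y(1)] Phi_set_vp[OF vt'] Phi_set_vp[OF y(3)]])
    from Suc.IH[OF lt vt' y(3) this] have "pe (tgt y, ?t) (tgt y, ys')" .
    from pe_cons[OF this y(1)] have "pe (v, y # ?t) (v, ys)" using ys y by simp
    from pe_trans[OF p2 this] show ?thesis .
  qed
qed

lemma Phi_inj: "vp (v, xs) \<Longrightarrow> vp (v, ys) \<Longrightarrow> Phi sig xs = Phi sig ys \<Longrightarrow> pe (v, xs) (v, ys)"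
  using inj_len by blast

lemma surj: "v \<in> Lam \<Longrightarrow> set_mset M \<subseteq> {z\<in>A. src z = v} \<Longrightarrow> \<exists>xs. vp (v, xs) \<and> Phi sig xs = M"
proof (induction "size M" arbitrary: M v)
  case 0 then show ?case by (intro exI[of _ "[]"]) (simp add: is_path_def)
next
  case (Suc n)
  then obtain x M0 where Mx: "M = add_mset x M0" by (metis size_eq_Suc_imp_eq_union)
  with Suc.prems have x: "x \<in> A" "src x = v" and M: "set_mset M0 \<subseteq> {z\<in>A. src z = v}" by auto
  let ?S = "{y\<in>A. src y = tgt x}" and ?f = "\<lambda>y. fst (sig x y)"
  have b: "bij_betw ?f ?S {y\<in>A. src y = v}" using nd[OF x(1)] x by simp
  let ?M = "image_mset (inv_into ?S ?f) M0"
  have sM: "set_mset ?M \<subseteq> ?S" using M b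
    by (auto simp: bij_betw_def intro!: inv_into_into)
  have sz: "n = size ?M" using Suc.hyps(2) Mx by simp
  from Suc.hyps(1)[OF sz _ sM] quiv[OF x(1)] obtain xs where xs: "vp (tgt x, xs)" "Phi sig xs = ?M" by blast
  have "image_mset ?f ?M = M0"
  proof -
    have "image_mset ?f ?M = image_mset (?f \<circ> inv_into ?S ?f) M0" by (simp add: multiset.map_comp)
    also have "\<dots> = image_mset id M0"
    proof (rule image_mset_cong)
      fix y assume "y \<in># M0"
      then have "y \<in> ?f ` ?S" using M b by (auto simp: bij_betw_def)
      then show "(?f \<circ> inv_into ?S ?f) y = id y" using f_inv_into_f[of y ?f ?S] by simp
    qed
    finally show ?thesis by simp
  qed
  then have "Phi sig (x # xs) = M" using xs Mx by simp
  moreover have "vp (v, x # xs)" using xs x Suc.prems by (simp add: vp_cons)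
  ultimately show ?case by blast
qed

lemma vp_append: "vp (v, xs) \<Longrightarrow> vp (ptgt tgt (v, xs), ys) \<Longrightarrow> vp (v, xs @ ys)"
  unfolding is_path_def by (auto simp: chain_append)

abbreviation "cl \<equiv> cls Lam A src tgt sig"

lemma ldiv_iff:
  assumes p: "vp p" and q: "vp q"
  shows "ldiv Lam A src tgt sig (cl p) (cl q) \<longleftrightarrow> fst p = fst q \<and> Phi sig (snd p) \<subseteq># Phi sig (snd q)"
proof
  assume "ldiv Lam A src tgt sig (cl p) (cl q)"
  then obtain p1 r where h: "vp p1" "vp r" "fst r = ptgt tgt p1" "cl p = cl p1"
    "cl q = cl (fst p1, snd p1 @ snd r)" unfolding ldiv_def by blast
  from pe_props[OF cls_eqD[OF h(4)] p] have a: "fst p = fst p1" "Phi sig (snd p) = Phi sig (snd p1)" by auto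
  from pe_props[OF cls_eqD[OF h(5)] q] have b: "fst q = fst p1" "Phi sig (snd q) = Phi sig (snd p1 @ snd r)" by auto
  show "fst p = fst q \<and> Phi sig (snd p) \<subseteq># Phi sig (snd q)"
    using a b by (simp add: Phi_append)
next
  assume h: "fst p = fst q \<and> Phi sig (snd p) \<subseteq># Phi sig (snd q)"
  obtain v xs where pv: "p = (v, xs)" by (cases p)
  obtain ys where qv: "q = (v, ys)" using h pv by (cases q) auto
  let ?D = "Phi sig ys - Phi sig xs"
  let ?w = "ptgt tgt (v, xs)"
  let ?S = "{z\<in>A. src z = ?w}"
  have b: "bij_betw (Lp sig xs) ?S {z\<in>A. src z = v}"
    using Lp_bij[of xs v] p pv unfolding is_path_def by simp
  have "set_mset (Phi sig ys) \<subseteq> {z\<in>A. src z = v}" using Phi_set_vp q qv by simp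
  then have Ds: "set_mset ?D \<subseteq> {z\<in>A. src z = v}" by (auto dest: in_diffD)
  let ?D' = "image_mset (inv_into ?S (Lp sig xs)) ?D"
  have sD: "set_mset ?D' \<subseteq> ?S" using Ds b
    by (auto simp: bij_betw_def intro!: inv_into_into)
  from surj[OF ptgt_Lam[OF p, unfolded pv] sD] obtain rs where
    r: "vp (?w, rs)" "Phi sig rs = ?D'" by auto
  have "image_mset (Lp sig xs) ?D' = ?D"
  proof -
    have "image_mset (Lp sig xs) ?D' = image_mset (Lp sig xs \<circ> inv_into ?S (Lp sig xs)) ?D"
      by (simp add: multiset.map_comp)
    also have "\<dots> = image_mset id ?D"
      by (rule image_mset_cong) (use Ds b in \<open>auto simp: bij_betw_def f_inv_into_f\<close>)
    finally show ?thesis by simp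
  qed
  then have ph: "Phi sig (xs @ rs) = Phi sig ys" using r h pv qv
    by (simp add: Phi_append subset_mset.add_diff_inverse)
  have vpr: "vp (v, xs @ rs)" using vp_append p pv r by simp
  have "pe q (v, xs @ rs)" using Phi_inj[OF _ vpr] q qv ph by simp
  then have "cl q = cl (v, xs @ rs)" by (rule cls_eq)
  then show "ldiv Lam A src tgt sig (cl p) (cl q)"
    unfolding ldiv_def
    using p pv r \<open>cl q = _\<close> by (intro exI[of _ p] exI[of _ "(?w, rs)"] conjI) simp_all
qed

lemma SQ1:
  assumes "vp (v, xs)" "\<not> sqf (Phi sig xs)"
  shows "\<exists>a b w. pe (v, xs) (v, a # b # w) \<and> a \<in> A \<and> b \<in> A \<and> tgt a = src b \<and> fst (sig a b) = a"
proof -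
  from assms(2) obtain z where "count (Phi sig xs) z > 1" unfolding sqf_def by (auto simp: not_le)
  then have cz: "count (Phi sig xs) z \<ge> 2" by simp
  then have "z \<in># Phi sig xs" by (metis not_in_iff not_numeral_le_zero)
  from realize[OF assms(1) this] obtain s where s: "pe (v, xs) (v, z # s)" by blast
  from pe_props[OF s assms(1)] have vz: "vp (v, z # s)" and ph: "Phi sig xs = Phi sig (z # s)" by auto
  from vz have z: "z \<in> A" "src z = v" "vp (tgt z, s)" by (auto simp: vp_cons)
  have "count (image_mset (\<lambda>y. fst (sig z y)) (Phi sig s)) z \<ge> 1" using cz ph by simp
  then have "z \<in># image_mset (\<lambda>y. fst (sig z y)) (Phi sig s)" by (simp add: Suc_le_lessD)
  then obtain y where y: "y \<in># Phi sig s" "z = fst (sig z y)" by auto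
  from realize[OF z(3) y(1)] obtain s' where s': "pe (tgt z, s) (tgt z, y # s')" by blast
  from pe_cons[OF s' z(1)] z have p2: "pe (v, z # s) (v, z # y # s')" by simp
  from pe_props[OF s' z(3)] have "vp (tgt z, y # s')" by simp
  then have "y \<in> A" "tgt z = src y" by (auto simp: vp_cons)
  then show ?thesis using pe_trans[OF s p2] z y by metis
qed

end

definition rsig :: "('a \<Rightarrow> 'a \<Rightarrow> 'a \<times> 'a) \<Rightarrow> 'a \<Rightarrow> 'a \<Rightarrow> 'a \<times> 'a" where
  "rsig s = (\<lambda>a b. prod.swap (s b a))"

definition revp :: "('a \<Rightarrow> 'v) \<Rightarrow> 'v \<times> 'a list \<Rightarrow> 'v \<times> 'a list" where
  "revp tgt p = (ptgt tgt p, rev (snd p))"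

lemma rsig_rsig: "rsig (rsig s) = s"
  by (simp add: rsig_def)

lemma chain_rev: "chain src tgt v xs \<Longrightarrow> chain tgt src (ptgt tgt (v, xs)) (rev xs)"
proof (induction xs arbitrary: v)
  case Nil then show ?case by simp
next
  case (Cons x xs)
  then have IH: "chain tgt src (ptgt tgt (tgt x, xs)) (rev xs)" by simp
  have "ptgt src (ptgt tgt (tgt x, xs), rev xs) = tgt x"
    using Cons.prems by (cases xs) (auto simp: ptgt_def last_rev)
  then show ?case using IH by (simp add: chain_append ptgt_Cons)
qed

lemma revp_revp: "chain src tgt v xs \<Longrightarrow> revp src (revp tgt (v, xs)) = (v, xs)"
  by (cases xs) (auto simp: revp_def ptgt_def last_rev)

lemma is_path_rev:
  assumes "\<forall>x\<in>A. tgt x \<in> Lam" "is_path Lam A src tgt p"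
  shows "is_path Lam A tgt src (revp tgt p)"
proof -
  have "ptgt tgt p \<in> Lam"
  proof (cases "snd p = []")
    case True then show ?thesis using assms by (simp add: is_path_def ptgt_def)
  next
    case False
    then have "last (snd p) \<in> A" using assms(2) by (auto simp: is_path_def)
    then show ?thesis using assms(1) False by (simp add: ptgt_def)
  qed
  then show ?thesis using assms chain_rev[of src tgt "fst p" "snd p"]
    by (auto simp: is_path_def revp_def)
qed

lemma ystep_rev:
  assumes Q: "\<forall>x\<in>A. tgt x \<in> Lam"
    and C: "\<forall>x y. x \<in> A \<longrightarrow> y \<in> A \<longrightarrow> tgt x = src y \<longrightarrow> tgt (snd (s x y)) = tgt y"
    and st: "ystep Lam A src tgt s a b"
  shows "ystep Lam A tgt src (rsig s) (revp tgt a) (revp tgt b)"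
  using st
proof (cases rule: ystep.cases)
  case (1 v u x y w)
  have va: "is_path Lam A src tgt a" using 1 by simp
  then have xy: "x \<in> A" "y \<in> A" "tgt x = src y" using 1
    by (auto simp: is_path_def chain_append)
  have pt: "ptgt tgt b = ptgt tgt a"
    using 1 C xy by (cases w) (auto simp: ptgt_def)
  have ra: "revp tgt a = (ptgt tgt a, rev w @ [y, x] @ rev u)" using 1 by (simp add: revp_def)
  have rb: "revp tgt b = (ptgt tgt a, rev w @ [fst (rsig s y x), snd (rsig s y x)] @ rev u)"
    using 1 pt by (simp add: revp_def rsig_def)
  have "is_path Lam A tgt src (ptgt tgt a, rev w @ [y, x] @ rev u)"
    using is_path_rev[OF Q va] ra by simp
  from ystep.intros[OF this] show ?thesis using ra rb by simp
qed

lemma rtranclp_map: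
  assumes "\<And>a b. r a b \<Longrightarrow> r' (f a) (f b)" "r\<^sup>*\<^sup>* x y"
  shows "r'\<^sup>*\<^sup>* (f x) (f y)"
  using assms(2)
proof (induction rule: rtranclp_induct)
  case base then show ?case by simp
next
  case (step y z)
  from rtranclp.rtrancl_into_rtrancl[OF step.IH assms(1)[OF step.hyps(2)]] show ?case .
qed

lemma peq_rev:
  assumes Q: "\<forall>x\<in>A. tgt x \<in> Lam"
    and C: "\<forall>x y. x \<in> A \<longrightarrow> y \<in> A \<longrightarrow> tgt x = src y \<longrightarrow> tgt (snd (s x y)) = tgt y"
    and st: "peq Lam A src tgt s a b"
  shows "peq Lam A tgt src (rsig s) (revp tgt a) (revp tgt b)"
proof -
  have "(\<lambda>a b. ystep Lam A tgt src (rsig s) a b \<or> ystep Lam A tgt src (rsig s) b a) (revp tgt u) (revp tgt w)"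
    if "(\<lambda>a b. ystep Lam A src tgt s a b \<or> ystep Lam A src tgt s b a) u w" for u w
    using that ystep_rev[OF Q C, of u w] ystep_rev[OF Q C, of w u] by blast
  from rtranclp_map[of "\<lambda>a b. ystep Lam A src tgt s a b \<or> ystep Lam A src tgt s b a"
      "\<lambda>a b. ystep Lam A tgt src (rsig s) a b \<or> ystep Lam A tgt src (rsig s) b a" "revp tgt", OF this] st
  show ?thesis unfolding peq_def by blast
qed

lemma braid_comps:
  assumes "qybm Lam A src tgt s" "x \<in> A" "y \<in> A" "z \<in> A" "tgt x = src y" "tgt y = src z"
  shows "fst (s x (fst (s y z))) = fst (s (fst (s x y)) (fst (s (snd (s x y)) z)))"
    and "snd (s (snd (s x y)) z) = snd (s (snd (s x (fst (s y z)))) (snd (s y z)))"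
proof -
  from assms(1) have "\<forall>x y z. composable A src tgt x y \<and> composable A src tgt y z \<longrightarrow>
        sig1 s (sig2 s (sig1 s (x, y, z))) = sig2 s (sig1 s (sig2 s (x, y, z)))"
    unfolding qybm_def by (elim conjE)
  then have "sig1 s (sig2 s (sig1 s (x, y, z))) = sig2 s (sig1 s (sig2 s (x, y, z)))"
    using assms(2-6) unfolding composable_def by simp
  then have e: "(fst (s (fst (s x y)) (fst (s (snd (s x y)) z))),
      snd (s (fst (s x y)) (fst (s (snd (s x y)) z))), snd (s (snd (s x y)) z)) =
    (fst (s x (fst (s y z))), fst (s (snd (s x (fst (s y z)))) (snd (s y z))),
      snd (s (snd (s x (fst (s y z)))) (snd (s y z))))"
    by (simp add: sig1_def sig2_def case_prod_beta prod_eq_iff)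
  from e show "fst (s x (fst (s y z))) = fst (s (fst (s x y)) (fst (s (snd (s x y)) z)))" by simp
  from e show "snd (s (snd (s x y)) z) = snd (s (snd (s x (fst (s y z)))) (snd (s y z)))" using e[unfolded prod.inject] by blast
qed

lemma phith_main:
  assumes "qybm Lam A src tgt s" "involutive A src tgt s" "nondegenerate A src tgt s"
  shows "phith Lam A src tgt s"
proof
  fix x assume "x \<in> A" then show "src x \<in> Lam \<and> tgt x \<in> Lam"
    using assms(1) by (simp add: qybm_def quiver_def)
next
  fix x y assume "x \<in> A" "y \<in> A" "tgt x = src y"
  then show "fst (s x y) \<in> A \<and> snd (s x y) \<in> A \<and> src (fst (s x y)) = src x \<and>
        tgt (fst (s x y)) = src (snd (s x y)) \<and> tgt (snd (s x y)) = tgt y"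
    using assms(1) by (simp add: qybm_def composable_def)
next
  fix x y assume "x \<in> A" "y \<in> A" "tgt x = src y"
  then show "fst (s (fst (s x y)) (snd (s x y))) = x"
    using assms(2) by (simp add: involutive_def composable_def)
next
  fix x y z assume "x \<in> A" "y \<in> A" "z \<in> A" "tgt x = src y" "tgt y = src z"
  then show "fst (s x (fst (s y z))) = fst (s (fst (s x y)) (fst (s (snd (s x y)) z)))"
    by (rule braid_comps(1)[OF assms(1)])
next
  fix x assume "x \<in> A"
  then show "bij_betw (\<lambda>y. fst (s x y)) {y\<in>A. src y = tgt x} {y\<in>A. src y = src x}"
    using assms(3) by (simp add: nondegenerate_def)
qed

lemma phith_rev:
  assumes "qybm Lam A src tgt s" "involutive A src tgt s" "nondegenerate A src tgt s"
  shows "phith Lam A tgt src (rsig s)"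
proof
  fix x assume "x \<in> A" then show "tgt x \<in> Lam \<and> src x \<in> Lam"
    using assms(1) by (simp add: qybm_def quiver_def)
next
  fix x y assume "x \<in> A" "y \<in> A" "src x = tgt y"
  then show "fst (rsig s x y) \<in> A \<and> snd (rsig s x y) \<in> A \<and> tgt (fst (rsig s x y)) = tgt x \<and>
        src (fst (rsig s x y)) = tgt (snd (rsig s x y)) \<and> src (snd (rsig s x y)) = src y"
    using assms(1) by (simp add: qybm_def composable_def rsig_def)
next
  fix x y assume "x \<in> A" "y \<in> A" "src x = tgt y"
  then have "s (fst (s y x)) (snd (s y x)) = (y, x)"
    using assms(2) by (simp add: involutive_def composable_def)
  then show "fst (rsig s (fst (rsig s x y)) (snd (rsig s x y))) = x"
    by (simp add: rsig_def)
next
  fix x y z assume "x \<in> A" "y \<in> A" "z \<in> A" "src x = tgt y" "src y = tgt z"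
  then show "fst (rsig s x (fst (rsig s y z))) = fst (rsig s (fst (rsig s x y)) (fst (rsig s (snd (rsig s x y)) z)))"
    using braid_comps(2)[OF assms(1), of z y x] by (simp add: rsig_def)
next
  fix x assume "x \<in> A"
  then show "bij_betw (\<lambda>y. fst (rsig s x y)) {y\<in>A. tgt y = src x} {y\<in>A. tgt y = tgt x}"
    using assms(3) by (simp add: nondegenerate_def rsig_def)
qed

lemma sqf_sup: "sqf M \<Longrightarrow> sqf N \<Longrightarrow> sqf (M \<union># N)"
  unfolding sqf_def by simp

lemma sqf_mono: "M \<subseteq># N \<Longrightarrow> sqf N \<Longrightarrow> sqf M"
  unfolding sqf_def by (meson dual_order.trans mset_subset_eq_count)

lemma sqf_mset: "sqf (mset ys) \<longleftrightarrow> distinct ys"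
  unfolding sqf_def distinct_count_atmost_1
proof (intro iffI allI)
  fix a assume h: "\<forall>z. count (mset ys) z \<le> 1"
  show "count (mset ys) a = (if a \<in> set ys then 1 else 0)"
  proof (cases "a \<in> set ys")
    case True
    then have "count (mset ys) a > 0" by simp
    then have "count (mset ys) a = 1" using h[rule_format, of a] by linarith
    then show ?thesis using True by simp
  next
    case False
    then show ?thesis by (simp add: count_mset_0_iff)
  qed
next
  fix a assume "\<forall>a. count (mset ys) a = (if a \<in> set ys then 1 else 0)"
  then show "count (mset ys) a \<le> 1" by (metis le_numeral_extra(4) zero_le)
qed

locale ybm =
  fixes Lam :: "'v set" and A :: "'a set" and src tgt :: "'a \<Rightarrow> 'v"
    and sig :: "'a \<Rightarrow> 'a \<Rightarrow> 'a \<times> 'a"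
  assumes Y: "qybm Lam A src tgt sig" and I: "involutive A src tgt sig"
    and N: "nondegenerate A src tgt sig"

sublocale ybm \<subseteq> F: phith Lam A src tgt sig by (rule phith_main[OF Y I N])
sublocale ybm \<subseteq> R: phith Lam A tgt src "rsig sig" by (rule phith_rev[OF Y I N])

context ybm begin

definition Psi :: "'a list \<Rightarrow> 'a multiset" where
  "Psi xs = Phi (rsig sig) (rev xs)"

lemma Qt: "\<forall>x\<in>A. tgt x \<in> Lam" using F.quiv by blast
lemma Qs: "\<forall>x\<in>A. src x \<in> Lam" using F.quiv by blast
lemma Ct: "\<forall>x y. x \<in> A \<longrightarrow> y \<in> A \<longrightarrow> tgt x = src y \<longrightarrow> tgt (snd (sig x y)) = tgt y"
  using F.comp by blast
lemma Cs: "\<forall>x y. x \<in> A \<longrightarrow> y \<in> A \<longrightarrow> src x = tgt y \<longrightarrow> src (snd (rsig sig x y)) = src y"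
  using R.comp by blast

lemma K:
  assumes "x \<in> A" "y \<in> A" "tgt x = src y"
  shows "fst (sig x y) = x \<longleftrightarrow> snd (sig x y) = y"
proof
  assume h: "fst (sig x y) = x"
  have c: "snd (sig x y) \<in> A" "src (snd (sig x y)) = tgt x" using F.comp[OF assms] h by auto
  have "sig (fst (sig x y)) (snd (sig x y)) = (x, y)" using I assms by (simp add: involutive_def composable_def)
  then have "fst (sig x (snd (sig x y))) = fst (sig x y)" using h by simp
  moreover have "inj_on (\<lambda>z. fst (sig x z)) {z\<in>A. src z = tgt x}" by (rule F.Lx_inj[OF assms(1)])
  ultimately show "snd (sig x y) = y" using c assms unfolding inj_on_def by auto
next
  assume h: "snd (sig x y) = y"
  have c: "fst (sig x y) \<in> A" "tgt (fst (sig x y)) = src y" using F.comp[OF assms] h by auto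
  have "sig (fst (sig x y)) (snd (sig x y)) = (x, y)" using I assms by (simp add: involutive_def composable_def)
  then have "snd (sig (fst (sig x y)) y) = snd (sig x y)" using h by simp
  moreover have "inj_on (\<lambda>z. snd (sig z y)) {z\<in>A. tgt z = src y}"
    using N assms(2) unfolding nondegenerate_def bij_betw_def by blast
  ultimately show "fst (sig x y) = x" using c assms unfolding inj_on_def by auto
qed

lemma psi_inv:
  assumes "F.pe p q" "F.vp p"
  shows "Psi (snd p) = Psi (snd q) \<and> ptgt tgt p = ptgt tgt q"
proof -
  have "R.pe (revp tgt p) (revp tgt q)" by (rule peq_rev[OF Qt Ct assms(1)])
  from R.pe_props[OF this is_path_rev[OF Qt assms(2)]] show ?thesis
    by (simp add: revp_def Psi_def)
qed

lemma psi_inj: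
  assumes "F.vp p" "F.vp q" "ptgt tgt p = ptgt tgt q" "Psi (snd p) = Psi (snd q)"
  shows "F.pe p q"
proof -
  have a: "R.vp (revp tgt p)" "R.vp (revp tgt q)" using is_path_rev[OF Qt] assms by auto
  have "R.pe (revp tgt p) (revp tgt q)"
    using R.Phi_inj[of "ptgt tgt p" "rev (snd p)" "rev (snd q)"] a assms(3,4)
    by (simp add: revp_def Psi_def)
  from peq_rev[OF Qs Cs this] have "peq Lam A src tgt sig (revp src (revp tgt p)) (revp src (revp tgt q))"
    by (simp add: rsig_rsig)
  moreover have "revp src (revp tgt p) = p" "revp src (revp tgt q) = q"
    using revp_revp[of src tgt "fst p" "snd p"] revp_revp[of src tgt "fst q" "snd q"] assms(1,2)
    by (auto simp: is_path_def)
  ultimately show ?thesis by simp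
qed

lemma phi_to_psi:
  assumes "F.vp p" "sqf (Phi sig (snd p))"
  shows "sqf (Psi (snd p))"
proof (rule ccontr)
  assume ns: "\<not> sqf (Psi (snd p))"
  obtain v xs where p: "p = (v, xs)" by (cases p)
  let ?w = "ptgt tgt p"
  have rv: "R.vp (?w, rev xs)" using is_path_rev[OF Qt assms(1)] p by (simp add: revp_def)
  from R.SQ1[OF rv] ns p obtain a b t where
    h: "R.pe (?w, rev xs) (?w, a # b # t)" "a \<in> A" "b \<in> A" "src a = tgt b" "fst (rsig sig a b) = a"
    by (auto simp: Psi_def)
  from peq_rev[OF Qs Cs h(1)] have "F.pe (revp src (?w, rev xs)) (revp src (?w, a # b # t))"
    by (simp add: rsig_rsig)
  moreover have "revp src (?w, rev xs) = p"
    using revp_revp[of src tgt v xs] assms(1) p by (auto simp: is_path_def revp_def)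
  ultimately have pe: "F.pe p (ptgt src (?w, a # b # t), rev t @ [b, a] @ [])" by (simp add: revp_def)
  have "snd (sig b a) = a" using h(5) by (simp add: rsig_def)
  then have "fst (sig b a) = b" using K[of b a] h by simp
  then have "\<not> sqf (Phi sig (rev t @ [b, a] @ []))" by (rule SQ2)
  moreover have "Phi sig (snd p) = Phi sig (rev t @ [b, a] @ [])" using F.pe_props[OF pe assms(1)] by simp
  ultimately show False using assms(2) by simp
qed

lemma psi_to_phi:
  assumes "F.vp p" "sqf (Psi (snd p))"
  shows "sqf (Phi sig (snd p))"
proof (rule ccontr)
  assume ns: "\<not> sqf (Phi sig (snd p))"
  obtain v xs where p: "p = (v, xs)" by (cases p)
  from F.SQ1[of v xs] assms(1) ns p obtain a b t where
    h: "F.pe (v, xs) (v, a # b # t)" "a \<in> A" "b \<in> A" "tgt a = src b" "fst (sig a b) = a" by auto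
  have "snd (sig a b) = b" using K[of a b] h by simp
  then have "fst (rsig sig b a) = b" by (simp add: rsig_def)
  then have "\<not> sqf (Phi (rsig sig) (rev t @ [b, a] @ []))" by (rule SQ2)
  then have "\<not> sqf (Psi (a # b # t))" by (simp add: Psi_def)
  moreover have "Psi (snd p) = Psi (a # b # t)" using psi_inv[of p "(v, a # b # t)"] h(1) assms(1) p by simp
  ultimately show False using assms(2) by simp
qed

end

context ybm begin

abbreviation "Om \<equiv> Omega A src tgt sig"
abbreviation "Oms \<equiv> Omegas A src tgt sig"

lemma om1:
  "length ys = n \<Longrightarrow> ys \<noteq> [] \<Longrightarrow> set ys \<subseteq> A \<Longrightarrow> (\<forall>y\<in>set ys. tgt y = mu) \<Longrightarrow>
   Om ys \<in> A \<and> tgt (Om ys) = (if tl ys = [] then mu else src (Om (tl ys)))"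
proof (induction n arbitrary: ys)
  case 0 then show ?case by simp
next
  case (Suc n)
  show ?case
  proof (cases "tl ys")
    case Nil
    then obtain y where "ys = [y]" using Suc.prems by (cases ys) auto
    then show ?thesis using Suc.prems by simp
  next
    case (Cons y2 zs)
    then obtain y1 where ys: "ys = y1 # y2 # zs" using Suc.prems by (cases ys) auto
    let ?W = "Om (y2 # zs)" and ?V = "Om (y1 # zs)"
    have W: "?W \<in> A" "tgt ?W = (if zs = [] then mu else src (Om zs))"
      using Suc.IH[of "y2 # zs"] Suc.prems ys by auto
    have V: "?V \<in> A" "tgt ?V = (if zs = [] then mu else src (Om zs))"
      using Suc.IH[of "y1 # zs"] Suc.prems ys by auto
    have b: "bij_betw (\<lambda>z. snd (sig z ?W)) {z\<in>A. tgt z = src ?W} {z\<in>A. tgt z = tgt ?W}"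
      using N W(1) unfolding nondegenerate_def by blast
    have "?V \<in> (\<lambda>z. snd (sig z ?W)) ` {z\<in>A. tgt z = src ?W}"
      using b V W unfolding bij_betw_def by auto
    then have "inv_into {z\<in>A. tgt z = src ?W} (\<lambda>z. snd (sig z ?W)) ?V \<in> {z\<in>A. tgt z = src ?W}"
      by (rule inv_into_into)
    moreover have "Om ys = inv_into {z\<in>A. tgt z = src ?W} (\<lambda>z. snd (sig z ?W)) ?V"
      using ys by (simp add: tstar_def bullet_def)
    ultimately show ?thesis using ys by simp
  qed
qed

lemma om_A: "ys \<noteq> [] \<Longrightarrow> set ys \<subseteq> A \<Longrightarrow> (\<forall>y\<in>set ys. tgt y = mu) \<Longrightarrow> Om ys \<in> A"
  using om1 by blast

lemma om_tgt: "ys \<noteq> [] \<Longrightarrow> set ys \<subseteq> A \<Longrightarrow> (\<forall>y\<in>set ys. tgt y = mu) \<Longrightarrow>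
   tgt (Om ys) = (if tl ys = [] then mu else src (Om (tl ys)))"
  using om1 by blast

lemma om2:
  assumes "set (y1 # y2 # zs) \<subseteq> A" "\<forall>y\<in>set (y1 # y2 # zs). tgt y = mu"
  shows "snd (sig (Om (y1 # y2 # zs)) (Om (y2 # zs))) = Om (y1 # zs)"
proof -
  let ?W = "Om (y2 # zs)" and ?V = "Om (y1 # zs)"
  have W: "?W \<in> A" "tgt ?W = (if zs = [] then mu else src (Om zs))"
    using om_A[of "y2 # zs" mu] om_tgt[of "y2 # zs" mu] assms by auto
  have V: "?V \<in> A" "tgt ?V = (if zs = [] then mu else src (Om zs))"
    using om_A[of "y1 # zs" mu] om_tgt[of "y1 # zs" mu] assms by auto
  have b: "bij_betw (\<lambda>z. snd (sig z ?W)) {z\<in>A. tgt z = src ?W} {z\<in>A. tgt z = tgt ?W}"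
    using N W(1) unfolding nondegenerate_def by blast
  have "?V \<in> (\<lambda>z. snd (sig z ?W)) ` {z\<in>A. tgt z = src ?W}"
    using b V W unfolding bij_betw_def by auto
  then have "(\<lambda>z. snd (sig z ?W)) (inv_into {z\<in>A. tgt z = src ?W} (\<lambda>z. snd (sig z ?W)) ?V) = ?V"
    by (rule f_inv_into_f)
  then show ?thesis by (simp add: tstar_def bullet_def)
qed

lemma om_chain:
  "ys \<noteq> [] \<Longrightarrow> set ys \<subseteq> A \<Longrightarrow> (\<forall>y\<in>set ys. tgt y = mu) \<Longrightarrow>
   F.vp (src (Om ys), Oms ys) \<and> ptgt tgt (src (Om ys), Oms ys) = mu"
proof (induction ys)
  case Nil then show ?case by simp
next
  case (Cons y ys)
  show ?case
  proof (cases ys)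
    case Nil
    then show ?thesis using Cons.prems Qs by (simp add: is_path_def ptgt_def)
  next
    case (Cons y2 zs)
    have IH: "F.vp (src (Om ys), Oms ys)" "ptgt tgt (src (Om ys), Oms ys) = mu"
      using Cons.IH Cons.prems \<open>ys = y2 # zs\<close> by auto
    have t: "tgt (Om (y # ys)) = src (Om ys)" and a: "Om (y # ys) \<in> A"
      using om_tgt[of "y # ys" mu] om_A[of "y # ys" mu] Cons.prems \<open>ys = y2 # zs\<close> by auto
    have "Oms (y # ys) = Om (y # ys) # Oms ys" by simp
    moreover have "F.vp (src (Om (y # ys)), Om (y # ys) # Oms ys)"
      using IH(1) t a Qs by (simp add: F.vp_cons)
    moreover have "ptgt tgt (src (Om (y # ys)), Om (y # ys) # Oms ys) = mu"
      using IH(2) t by (simp add: ptgt_Cons)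
    ultimately show ?thesis by simp
  qed
qed

lemma om_Lp:
  "set (y # ys) \<subseteq> A \<Longrightarrow> (\<forall>z\<in>set (y # ys). tgt z = mu) \<Longrightarrow>
   Lp (rsig sig) (rev (Oms ys)) (Om (y # ys)) = y"
proof (induction ys arbitrary: y)
  case Nil then show ?case by simp
next
  case (Cons y2 zs)
  have "rev (Oms (y2 # zs)) = rev (Oms zs) @ [Om (y2 # zs)]" by simp
  then have "Lp (rsig sig) (rev (Oms (y2 # zs))) (Om (y # y2 # zs)) =
      Lp (rsig sig) (rev (Oms zs)) (snd (sig (Om (y # y2 # zs)) (Om (y2 # zs))))"
    by (simp add: Lp_append rsig_def)
  also have "\<dots> = Lp (rsig sig) (rev (Oms zs)) (Om (y # zs))"
    using om2[of y y2 zs mu] Cons.prems by simp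
  also have "\<dots> = y" using Cons.IH[of y] Cons.prems by auto
  finally show ?case .
qed

lemma om_Psi:
  "set ys \<subseteq> A \<Longrightarrow> (\<forall>z\<in>set ys. tgt z = mu) \<Longrightarrow> Psi (Oms ys) = mset ys"
proof (induction ys)
  case Nil then show ?case by (simp add: Psi_def)
next
  case (Cons y ys)
  have "Psi (Oms (y # ys)) = Phi (rsig sig) (rev (Oms ys) @ [Om (y # ys)])"
    by (simp add: Psi_def)
  also have "\<dots> = Psi (Oms ys) + {# Lp (rsig sig) (rev (Oms ys)) (Om (y # ys)) #}"
    by (simp add: Phi_append Psi_def)
  also have "\<dots> = mset ys + {#y#}" using Cons om_Lp[of y ys mu] by simp
  finally show ?case by simp
qed

end

context ybm begin

abbreviation "SS \<equiv> {F.cl p | p. F.vp p \<and> sqf (Phi sig (snd p))}"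

lemma clos_sub: "f \<in> rlcm_closure Lam A src tgt sig \<Longrightarrow> f \<in> SS"
proof (induction rule: rlcm_closure.induct)
  case (idn v)
  then show ?case by (intro CollectI exI[of _ "(v, [])"]) (simp add: is_path_def sqf_def)
next
  case (gen x)
  then show ?case using Qs Qt
    by (intro CollectI exI[of _ "(src x, [x])"]) (simp add: is_path_def sqf_def)
next
  case (lcm f g m)
  from lcm.IH(1) obtain p where p: "f = F.cl p" "F.vp p" "sqf (Phi sig (snd p))" by blast
  from lcm.IH(2) obtain q where q: "g = F.cl q" "F.vp q" "sqf (Phi sig (snd q))" by blast
  from lcm.hyps(3) have l1: "ldiv Lam A src tgt sig f m" and l2: "ldiv Lam A src tgt sig g m"
    and l3: "\<forall>m'\<in>Mor Lam A src tgt sig. ldiv Lam A src tgt sig f m' \<and> ldiv Lam A src tgt sig g m' \<longrightarrow>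
        ldiv Lam A src tgt sig m m'"
    unfolding is_rlcm_def by auto
  from l1 obtain p1 r where h: "F.vp p1" "F.vp r" "fst r = ptgt tgt p1"
    "m = F.cl (fst p1, snd p1 @ snd r)" unfolding ldiv_def by blast
  let ?k = "(fst p1, snd p1 @ snd r)"
  have "r = (ptgt tgt p1, snd r)" using h(3) by (cases r) simp
  then have vk: "F.vp ?k" using F.vp_append[of "fst p1" "snd p1" "snd r"] h by simp
  have a: "fst p = fst ?k" "Phi sig (snd p) \<subseteq># Phi sig (snd ?k)"
    using l1 F.ldiv_iff[OF p(2) vk] p h by auto
  have b: "fst q = fst ?k" "Phi sig (snd q) \<subseteq># Phi sig (snd ?k)"
    using l2 F.ldiv_iff[OF q(2) vk] q h by auto
  let ?H = "Phi sig (snd p) \<union># Phi sig (snd q)"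
  have sp: "set_mset (Phi sig (snd p)) \<subseteq> {z\<in>A. src z = fst p}"
    using F.Phi_set_vp[of "fst p" "snd p"] p(2) by simp
  have "F.vp (fst q, snd q)" using q(2) by simp
  from F.Phi_set_vp[OF this] have sq: "set_mset (Phi sig (snd q)) \<subseteq> {z\<in>A. src z = fst p}"
    using a(1) b(1) by simp
  have "set_mset ?H \<subseteq> {z\<in>A. src z = fst p}" using sp sq by auto
  moreover have "fst p \<in> Lam" using p by (simp add: is_path_def)
  ultimately obtain hs where hs: "F.vp (fst p, hs)" "Phi sig hs = ?H" using F.surj by blast
  have d1: "ldiv Lam A src tgt sig f (F.cl (fst p, hs))"
    using F.ldiv_iff[OF p(2) hs(1)] p hs by simp
  have d2: "ldiv Lam A src tgt sig g (F.cl (fst p, hs))"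
    using F.ldiv_iff[OF q(2) hs(1)] q hs a b by simp
  have "F.cl (fst p, hs) \<in> Mor Lam A src tgt sig" using hs(1) by (auto simp: Mor_def)
  with l3 d1 d2 have "ldiv Lam A src tgt sig m (F.cl (fst p, hs))" by blast
  then have "Phi sig (snd ?k) \<subseteq># ?H" using F.ldiv_iff[OF vk hs(1)] h hs by simp
  moreover have "sqf ?H" using p q sqf_sup by blast
  ultimately have "sqf (Phi sig (snd ?k))" by (rule sqf_mono)
  then show ?case using h vk by (intro CollectI exI[of _ ?k]) simp
qed

lemma sub_clos_n:
  "length xs = n \<Longrightarrow> F.vp (v, xs) \<Longrightarrow> sqf (Phi sig xs) \<Longrightarrow> F.cl (v, xs) \<in> rlcm_closure Lam A src tgt sig"
proof (induction n arbitrary: v xs rule: less_induct)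
  case (less n)
  show ?case
  proof (cases xs)
    case Nil
    then show ?thesis using less.prems by (simp add: is_path_def rlcm_closure.idn)
  next
    case (Cons x xs')
    have x: "x \<in> A" "src x = v" using less.prems Cons by (auto simp: F.vp_cons)
    let ?M0 = "image_mset (\<lambda>y. fst (sig x y)) (Phi sig xs')"
    have M: "Phi sig xs = add_mset x ?M0" using Cons by simp
    show ?thesis
    proof (cases "xs' = []")
      case True
      have "F.cl (src x, [x]) \<in> rlcm_closure Lam A src tgt sig" by (rule rlcm_closure.gen[OF x(1)])
      then show ?thesis using Cons x True by simp
    next
      case False
      have vL: "v \<in> Lam" using less.prems by (simp add: is_path_def)
      have "set_mset (Phi sig xs) \<subseteq> {z\<in>A. src z = v}" using F.Phi_set_vp less.prems by blast
      then have "set_mset ?M0 \<subseteq> {z\<in>A. src z = v}" using M by auto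
      then obtain q0 where q0: "F.vp (v, q0)" "Phi sig q0 = ?M0" using F.surj vL by blast
      have lq: "length q0 < n" using size_Phi[of sig q0] size_Phi[of sig xs'] q0 less.prems Cons by simp
      have sM: "sqf (Phi sig xs)" using less.prems by simp
      have sq: "sqf ?M0" using sM M sqf_mono[of ?M0 "Phi sig xs"] by simp
      have "count (Phi sig xs) x \<le> 1" using sM unfolding sqf_def by blast
      then have nx: "count ?M0 x = 0" using M by simp
      have c0: "F.cl (v, q0) \<in> rlcm_closure Lam A src tgt sig"
        using less.IH[OF lq refl q0(1)] q0 sq by simp
      have c1: "F.cl (v, [x]) \<in> rlcm_closure Lam A src tgt sig"
        using rlcm_closure.gen[OF x(1), of Lam src tgt sig] x by simp
      have v1: "F.vp (v, [x])" using x vL by (simp add: is_path_def)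
      have "is_rlcm Lam A src tgt sig (F.cl (v, [x])) (F.cl (v, q0)) (F.cl (v, xs))"
        unfolding is_rlcm_def
      proof (intro conjI ballI impI)
        show "ldiv Lam A src tgt sig (F.cl (v, [x])) (F.cl (v, xs))"
          using F.ldiv_iff[OF v1 less.prems(2)] M by simp
        show "ldiv Lam A src tgt sig (F.cl (v, q0)) (F.cl (v, xs))"
          using F.ldiv_iff[OF q0(1) less.prems(2)] M q0 by simp
      next
        fix m' assume m': "m' \<in> Mor Lam A src tgt sig"
          and dv: "ldiv Lam A src tgt sig (F.cl (v, [x])) m' \<and> ldiv Lam A src tgt sig (F.cl (v, q0)) m'"
        from m' obtain k where k: "m' = F.cl k" "F.vp k" unfolding Mor_def by blast
        have e1: "fst k = v" "{#x#} \<subseteq># Phi sig (snd k)" using F.ldiv_iff[OF v1 k(2)] dv k by auto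
        have e2: "?M0 \<subseteq># Phi sig (snd k)" using F.ldiv_iff[OF q0(1) k(2)] dv k q0 by auto
        have "Phi sig xs \<subseteq># Phi sig (snd k)"
          unfolding subseteq_mset_def
        proof
          fix a show "count (Phi sig xs) a \<le> count (Phi sig (snd k)) a"
          proof (cases "a = x")
            case True
            have "x \<in># Phi sig (snd k)" using e1(2) by simp
            then have "count (Phi sig (snd k)) x \<ge> 1" by (simp add: Suc_le_eq)
            then show ?thesis using M nx True by simp
          next
            case False
            then show ?thesis using M e2 by (simp add: subseteq_mset_def)
          qed
        qed
        then show "ldiv Lam A src tgt sig (F.cl (v, xs)) m'"
          using F.ldiv_iff[OF less.prems(2) k(2)] k e1 by simp
      qed
      from rlcm_closure.lcm[OF c1 c0 this] show ?thesis .
    qed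
  qed
qed

lemma SS_eq: "rlcm_closure Lam A src tgt sig = SS"
proof
  show "rlcm_closure Lam A src tgt sig \<subseteq> SS" using clos_sub by blast
  show "SS \<subseteq> rlcm_closure Lam A src tgt sig"
  proof
    fix f assume "f \<in> SS"
    then obtain v xs where "f = F.cl (v, xs)" "F.vp (v, xs)" "sqf (Phi sig xs)" by auto
    then show "f \<in> rlcm_closure Lam A src tgt sig" using sub_clos_n by blast
  qed
qed

end

context ybm begin

lemma SS_RHS: "SS = {Delta Lam A src tgt sig ys | ys mu.
              mu \<in> Lam \<and> ys \<noteq> [] \<and> distinct ys \<and> set ys \<subseteq> {y\<in>A. tgt y = mu}}
           \<union> {cls Lam A src tgt sig (v, []) | v. v \<in> Lam}" (is "_ = ?D \<union> ?I")
proof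
  show "SS \<subseteq> ?D \<union> ?I"
  proof
    fix f assume "f \<in> SS"
    then obtain v xs where f: "f = F.cl (v, xs)" "F.vp (v, xs)" "sqf (Phi sig xs)" by auto
    show "f \<in> ?D \<union> ?I"
    proof (cases "xs = []")
      case True
      then show ?thesis using f by (auto simp: is_path_def)
    next
      case False
      have sP: "sqf (Psi xs)" using phi_to_psi[of "(v, xs)"] f by simp
      obtain ys where ys: "mset ys = Psi xs" using ex_mset by blast
      have dys: "distinct ys" using sP ys sqf_mset by metis
      have "length ys = length xs" using ys size_Phi[of "rsig sig" "rev xs"]
        by (metis Psi_def length_rev size_mset)
      then have ne: "ys \<noteq> []" using False by auto
      let ?mu = "ptgt tgt (v, xs)"
      have muL: "?mu \<in> Lam" using F.ptgt_Lam[OF f(2)] .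
      have "R.vp (?mu, rev xs)" using is_path_rev[OF Qt f(2)] by (simp add: revp_def)
      from R.Phi_set_vp[OF this] have sy: "set ys \<subseteq> {y\<in>A. tgt y = ?mu}"
        using ys by (metis Psi_def set_mset_mset)
      have ysA: "set ys \<subseteq> A" "\<forall>y\<in>set ys. tgt y = ?mu" using sy by auto
      let ?d = "(src (Om ys), Oms ys)"
      have d: "F.vp ?d" "ptgt tgt ?d = ?mu" using om_chain[OF ne ysA] by auto
      have "Psi (snd ?d) = Psi xs" using om_Psi[OF ysA] ys by simp
      then have "F.pe ?d (v, xs)" using psi_inj[OF d(1) f(2)] d(2) by simp
      then have "F.cl ?d = f" using cls_eq f(1) by metis
      then have "Delta Lam A src tgt sig ys = f" by (simp add: Delta_def)
      then have "f \<in> ?D" using muL ne dys sy by blast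
      then show ?thesis by blast
    qed
  qed
next
  show "?D \<union> ?I \<subseteq> SS"
  proof
    fix f assume "f \<in> ?D \<union> ?I"
    then show "f \<in> SS"
    proof
      assume "f \<in> ?D"
      then obtain ys mu where h: "f = Delta Lam A src tgt sig ys" "mu \<in> Lam" "ys \<noteq> []" "distinct ys"
        "set ys \<subseteq> {y\<in>A. tgt y = mu}" by blast
      have ysA: "set ys \<subseteq> A" "\<forall>y\<in>set ys. tgt y = mu" using h(5) by auto
      let ?d = "(src (Om ys), Oms ys)"
      have d: "F.vp ?d" using om_chain[OF h(3) ysA] by auto
      have "Psi (snd ?d) = mset ys" using om_Psi[OF ysA] by simp
      then have "sqf (Psi (snd ?d))" using h(4) sqf_mset by metis
      from psi_to_phi[OF d this] have "sqf (Phi sig (snd ?d))" .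
      moreover have "f = F.cl ?d" using h(1) by (simp add: Delta_def)
      ultimately show "f \<in> SS" using d by blast
    next
      assume "f \<in> ?I"
      then obtain v where "f = F.cl (v, [])" "v \<in> Lam" by blast
      then show "f \<in> SS" by (intro CollectI exI[of _ "(v, [])"]) (simp add: is_path_def sqf_def)
    qed
  qed
qed

end

theorem proposition5p11:
  fixes Lam :: "'v set" and A :: "'a set" and src tgt :: "'a \<Rightarrow> 'v"
    and sigma :: "'a \<Rightarrow> 'a \<Rightarrow> 'a \<times> 'a"
  assumes "qybm Lam A src tgt sigma"
    and "involutive A src tgt sigma"
    and "nondegenerate A src tgt sigma"
  shows "rlcm_closure Lam A src tgt sigma =
           {Delta Lam A src tgt sigma ys | ys mu.
              mu \<in> Lam \<and> ys \<noteq> [] \<and> distinct ys \<and> set ys \<subseteq> {y\<in>A. tgt y = mu}}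
           \<union> {cls Lam A src tgt sigma (v, []) | v. v \<in> Lam}"
proof -
  interpret ybm Lam A src tgt sigma using assms by unfold_locales
  show ?thesis using SS_eq SS_RHS by simp
qed

end
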